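(* Let $\lambda>1$ and let $(a_n)_{n\ge1}$, $(b_n)_{n\ge1}$ be real sequences with $a\doteq\sup_{n\ge1}a_n<\infty$ and $b_n\ge0$ for all $n$. Assume $a\ge(\lambda-1)[1-\ln(\lambda-1)]$ and let $u^*$ be the smallest positive fixed point of $f(u)=u^{\lambda}e^{a-u}$. Let $\{x_n\}$ be a non-negative solution of $$x_{n+1}=x_{n-1}^{\lambda}e^{a_n-b_nx_n-x_{n-1}},\qquad n\ge1.$$ If $x_k\in(0,u^* )$ for some $k\ge0$, then the terms $x_k,x_{k+2},x_{k+4},\dots$ are strictly decreasing and converge to $0$.
   Context: When $\lambda>1$ and $a\ge(\lambda-1)[1-\ln(\lambda-1)]$, the map $f(u)=u^\lambda e^{a-u}$ on $[0,\infty)$ has at least one positive fixed point; $u^*$ denotes the smallest one (the Allee fixed point of $f$). *)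

theory Defs
  imports Complex_Main
begin

definition allee_map :: "real \<Rightarrow> real \<Rightarrow> real \<Rightarrow> real" where
  "allee_map lam a u = u powr lam * exp (a - u)"

definition is_allee_fixed_point :: "real \<Rightarrow> real \<Rightarrow> real \<Rightarrow> bool" where
  "is_allee_fixed_point lam a u \<longleftrightarrow>
     u > 0 \<and> allee_map lam a u = u \<and>
     (\<forall>v. 0 < v \<and> allee_map lam a v = v \<longrightarrow> u \<le> v)"

end

theory Submission
  imports Defs
begin

lemma allee_cont: "u > 0 \<Longrightarrow> isCont (allee_map lam a) u"
  unfolding allee_map_def by (auto intro!: continuous_intros)

lemma allee_below:
  assumes lam: "lam > 1" and us: "is_allee_fixed_point lam a ustar"
    and u: "0 < u" "u < ustar"
  shows "allee_map lam a u < u"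
proof (rule ccontr)
  assume "\<not> allee_map lam a u < u"
  hence hu: "u \<le> allee_map lam a u" by simp
  define e where "e = min (u/2) (exp (-a/(lam-1)) / 2)"
  have e0: "0 < e" "e < u" using u by (auto simp: e_def)
  have "e < exp (-a/(lam-1))" unfolding e_def using exp_gt_zero[of "-a/(lam-1)"] by linarith
  hence "e powr (lam-1) < exp (-a/(lam-1)) powr (lam-1)"
    using e0 lam by (intro powr_less_mono2) auto
  also have "\<dots> = exp (-a)" using lam by (simp add: exp_powr_real)
  finally have p: "e powr (lam-1) < exp (-a)" .
  have pe: "e powr lam = e * e powr (lam-1)"
    using e0 powr_add[of e 1 "lam-1"] by simp
  have "allee_map lam a e = e powr (lam-1) * exp a * exp (-e) * e"
    unfolding allee_map_def using e0 pe
    by (simp add: powr_add[symmetric] exp_diff exp_minus field_simps)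
  also have "\<dots> < e"
  proof -
    have "e powr (lam-1) * exp a < 1" using p by (simp add: exp_minus field_simps)
    moreover have "exp (-e) < 1" using e0 by simp
    ultimately have "e powr (lam-1) * exp a * exp (-e) < 1"
      by (smt (verit) exp_gt_zero mult_less_cancel_left1 powr_ge_zero zero_le_mult_iff)
    thus ?thesis using e0 by simp
  qed
  finally have he: "allee_map lam a e - e < 0" by simp
  have "continuous_on {e..u} (\<lambda>v. allee_map lam a v - v)"
    using e0 by (intro continuous_at_imp_continuous_on ballI continuous_intros allee_cont) auto
  then obtain v where v: "e \<le> v" "v \<le> u" "allee_map lam a v - v = 0"
    using IVT'[of "\<lambda>v. allee_map lam a v - v" e 0 u] he hu e0 by auto
  hence "ustar \<le> v" using us e0 unfolding is_allee_fixed_point_def by auto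
  thus False using v u by auto
qed

theorem mainTheorem7:
  fixes lam a ustar :: real and as bs x :: "nat \<Rightarrow> real" and k :: nat
  assumes lam: "lam > 1"
    and bdd: "bdd_above (as ` {1..})"
    and a_def: "a = (SUP n\<in>{1..}. as n)"
    and bs_nonneg: "\<And>n. n \<ge> 1 \<Longrightarrow> bs n \<ge> 0"
    and a_ge: "a \<ge> (lam - 1) * (1 - ln (lam - 1))"
    and ustar: "is_allee_fixed_point lam a ustar"
    and x_nonneg: "\<And>n. x n \<ge> 0"
    and x_rec: "\<And>n. n \<ge> 1 \<Longrightarrow>
                  x (n + 1) = x (n - 1) powr lam * exp (as n - bs n * x n - x (n - 1))"
    and xk: "0 < x k" "x k < ustar"
  shows "(\<forall>j. x (k + 2 * (j + 1)) < x (k + 2 * j)) \<and> (\<lambda>j. x (k + 2 * j)) \<longlonglongrightarrow> 0"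
proof -
  define y where "y j = x (k + 2 * j)" for j
  have step: "y (Suc j) \<le> allee_map lam a (y j) \<and> y (Suc j) > 0" if "y j > 0" for j
  proof -
    define n where "n = k + 2 * j + 1"
    have n1: "n \<ge> 1" by (simp add: n_def)
    have yn: "y (Suc j) = x (n+1)" "y j = x (n - 1)" by (simp_all add: y_def n_def)
    have "as n \<le> a" unfolding a_def using bdd n1 by (intro cSUP_upper) auto
    moreover have "bs n * x n \<ge> 0" using bs_nonneg[OF n1] x_nonneg by simp
    ultimately have "exp (as n - bs n * x n - x (n - 1)) \<le> exp (a - x (n - 1))" by simp
    hence "x (n+1) \<le> x (n - 1) powr lam * exp (a - x (n - 1))"
      unfolding x_rec[OF n1] by (intro mult_left_mono) auto
    moreover have "x (n+1) > 0" unfolding x_rec[OF n1] using that yn by simp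
    ultimately show ?thesis using yn by (simp add: allee_map_def)
  qed
  have inv: "0 < y j \<and> y j < ustar \<and> y (Suc j) < y j" for j
  proof (induction j)
    case 0
    have "y 0 > 0" "y 0 < ustar" using xk by (simp_all add: y_def)
    then show ?case using step[of 0] allee_below[OF lam ustar, of "y 0"] by fastforce
  next
    case (Suc j)
    hence a: "0 < y (Suc j)" "y (Suc j) < ustar" using step[of j] by auto
    then show ?case using step[of "Suc j"] allee_below[OF lam ustar, of "y (Suc j)"] by fastforce
  qed
  have dec: "decseq y" using inv by (intro decseq_SucI) (auto intro: less_imp_le)
  obtain L where L: "y \<longlonglongrightarrow> L" "\<forall>i. L \<le> y i"
    using decseq_convergent[OF dec, of 0] inv by (auto intro: less_imp_le)
  have L0: "L \<ge> 0" using L inv by (intro LIMSEQ_le_const[OF L(1)]) (auto intro: less_imp_le)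
  have "L = 0"
  proof (rule ccontr)
    assume "L \<noteq> 0"
    hence Lp: "L > 0" using L0 by simp
    have Lu: "L < ustar" using L(2)[rule_format, of 0] inv[of 0] by simp
    have t1: "(\<lambda>j. allee_map lam a (y j)) \<longlonglongrightarrow> allee_map lam a L"
      using isCont_tendsto_compose[OF allee_cont[OF Lp] L(1)] .
    have t2: "(\<lambda>j. y (Suc j)) \<longlonglongrightarrow> L" using L(1) by (rule LIMSEQ_Suc)
    have "L \<le> allee_map lam a L"
      using LIMSEQ_le[OF t2 t1] step inv by auto
    thus False using allee_below[OF lam ustar Lp Lu] by simp
  qed
  show ?thesis using inv L(1) \<open>L = 0\<close> unfolding y_def by (simp add: algebra_simps)
qed

end
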